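(* Let $\lambda_1,\lambda_2\in\mathbb{D}$, let $(s,p)=(\lambda_1+\lambda_2,\lambda_1\lambda_2)$ (so $(s,p)\in\mathbb{G}$), let $\beta=\dfrac{s-\bar s p}{1-|p|^2}$ (so that $\beta\in\mathbb{D}$ and $s=\beta+\bar\beta p$), and let $a\in\mathbb{C}$. The following statements are equivalent: (1) $(a,s,p)\in\mathcal{P}$; (2) $(a,s,p)\in\mathcal{P}_\mu$; (3) $|a|<\left|1-\dfrac{\tfrac12 s\bar\beta}{1+\sqrt{1-|\beta|^2}}\right|$; (4) $|a|<\tfrac12|1-\bar\lambda_2\lambda_1|+\tfrac12(1-|\lambda_1|^2)^{1/2}(1-|\lambda_2|^2)^{1/2}$; (5) $\sup_{z\in\mathbb{D}}|\Psi_z(a,s,p)|<1$. In particular $\mathcal{P}=\mathcal{P}_\mu$.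
   Context: $\mathbb{D}$ is the open unit disc; $\mathbb{G}=\{(z+w,zw):|z|<1,|w|<1\}$. $\mathbb{B}$ is the open unit ball of $\mathbb{C}^{2\times2}$ in the operator norm. $\pi:\mathbb{C}^{2\times 2}\to\mathbb{C}^3$ is $\pi(A)=(a_{21},\operatorname{tr}A,\det A)$ for $A=[a_{ij}]$, and the pentablock is $\mathcal{P}=\pi(\mathbb{B})$. Let $E=\{\begin{pmatrix}z&w\\0&z\end{pmatrix}: z,w\in\mathbb{C}\}$ and $1/\mu_E(A)=\inf\{\|X\|:X\in E,\ \det(I-AX)=0\}$ ($\mu_E(A)=0$ if no such $X$). $\mathcal{P}_\mu=\{\pi(A): A\in\mathbb{C}^{2\times2},\ \mu_E(A)<1\}$. For $z\in\mathbb{D}$ and $(a,s,p)$ with $1-sz+pz^2\ne0$, $\Psi_z(a,s,p)=\dfrac{a(1-|z|^2)}{1-sz+pz^2}$. *)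

theory Defs
  imports "HOL-Analysis.Analysis"
begin

type_synonym cmat2 = "complex ^ 2 ^ 2"

definition opnorm :: "cmat2 \<Rightarrow> real" where
  "opnorm M = onorm (\<lambda>x::complex^2. M *v x)"

definition unit_ball_mat :: "cmat2 set" where
  "unit_ball_mat = {A. opnorm A < 1}"

definition pi_map :: "cmat2 \<Rightarrow> complex \<times> complex \<times> complex" where
  "pi_map A = (A $ 2 $ 1, A $ 1 $ 1 + A $ 2 $ 2, det A)"

definition pentablock :: "(complex \<times> complex \<times> complex) set" where
  "pentablock = pi_map ` unit_ball_mat"

definition symmetrized_bidisc :: "(complex \<times> complex) set" where
  "symmetrized_bidisc = {(z + w, z * w) | z w. norm z < 1 \<and> norm w < 1}"

definition E_space :: "cmat2 set" where
  "E_space = {X. \<exists>z w. X = (\<chi> i j. if i = j then z else if i = 1 \<and> j = 2 then w else 0)}"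

definition singular_set :: "cmat2 \<Rightarrow> cmat2 set" where
  "singular_set A = {X \<in> E_space. det (mat 1 - A ** X) = 0}"

text \<open>mu_E(A) = 1 / inf{||X|| : X in E, det(I - A X) = 0}, and 0 if no such X.
  (The infimum is always positive, since det(I - A X) = 1 at X = 0.)\<close>
definition mu_E :: "cmat2 \<Rightarrow> real" where
  "mu_E A = (if singular_set A = {} then 0 else 1 / Inf (opnorm ` singular_set A))"

definition pentablock_mu :: "(complex \<times> complex \<times> complex) set" where
  "pentablock_mu = pi_map ` {A. mu_E A < 1}"

definition Psi :: "complex \<Rightarrow> complex \<Rightarrow> complex \<Rightarrow> complex \<Rightarrow> complex" where
  "Psi z a s p = a * (1 - of_real ((cmod z)^2)) / (1 - s * z + p * z^2)"

end

theory Submission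
  imports Defs
begin


lemma cr: "complex_of_real ((cmod z)^2) = z * cnj z" by (rule complex_norm_square)

lemma lagr:
  fixes a b c d x1 x2 :: complex
  shows "(cmod (a*x1 + b*x2))^2 + (cmod (c*x1+d*x2))^2 + ((cmod (a*(-cnj x2) + b*cnj x1))^2 + (cmod (c*(-cnj x2)+d*cnj x1))^2) =
     ((cmod a)^2 + (cmod b)^2 + (cmod c)^2 + (cmod d)^2) * ((cmod x1)^2 + (cmod x2)^2)"
proof -
  have "complex_of_real ((cmod (a*x1 + b*x2))^2 + (cmod (c*x1+d*x2))^2 + ((cmod (a*(-cnj x2) + b*cnj x1))^2 + (cmod (c*(-cnj x2)+d*cnj x1))^2)) =
     complex_of_real (((cmod a)^2 + (cmod b)^2 + (cmod c)^2 + (cmod d)^2) * ((cmod x1)^2 + (cmod x2)^2))"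
    unfolding of_real_add of_real_mult cr
    by (simp add: algebra_simps)
  then show ?thesis using of_real_eq_iff by blast
qed

lemma lagrange2:
  fixes u1 u2 w1 w2 :: complex
  shows "((cmod u1)^2 + (cmod u2)^2) * ((cmod w1)^2 + (cmod w2)^2) = (cmod (u1*w2 - u2*w1))^2 + (cmod (u1 * cnj w1 + u2 * cnj w2))^2"
proof -
  have "complex_of_real (((cmod u1)^2 + (cmod u2)^2) * ((cmod w1)^2 + (cmod w2)^2)) = complex_of_real ((cmod (u1*w2 - u2*w1))^2 + (cmod (u1 * cnj w1 + u2 * cnj w2))^2)"
    unfolding of_real_add of_real_mult cr
    by (simp add: algebra_simps)
  then show ?thesis using of_real_eq_iff by blast
qed

lemma normsq: "(norm (x::complex^2))^2 = (cmod (x$1))^2 + (cmod (x$2))^2"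
  by (simp add: norm_vec_def L2_set_def sum_2)

lemma mv1: "((A::cmat2) *v v) $ 1 = A$1$1 * v$1 + A$1$2 * v$2"
  by (simp add: matrix_vector_mult_def sum_2)
lemma mv2: "((A::cmat2) *v v) $ 2 = A$2$1 * v$1 + A$2$2 * v$2"
  by (simp add: matrix_vector_mult_def sum_2)

definition Fro :: "cmat2 \<Rightarrow> real" where
  "Fro A = (cmod (A$1$1))^2 + (cmod (A$1$2))^2 + (cmod (A$2$1))^2 + (cmod (A$2$2))^2"

definition cA :: "cmat2 \<Rightarrow> real" where
  "cA A = (Fro A + sqrt ((Fro A)^2 - 4 * (cmod (det A))^2)) / 2"

lemma real_step:
  fixes X Y N F d :: real
  assumes "X \<ge> 0" "Y \<ge> 0" "N \<ge> 0" "X + Y = F * N" "d^2 * N^2 \<le> X * Y"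
  shows "X \<le> (F + sqrt (F^2 - 4*d^2)) / 2 * N"
proof -
  have "(2*X - F*N)^2 = (X - Y)^2" using assms(4)[symmetric] by simp
  also have "\<dots> = (X+Y)^2 - 4*(X*Y)" by (simp add: power2_eq_square algebra_simps)
  also have "\<dots> \<le> (F^2 - 4*d^2) * N^2" using assms(4,5) by (simp add: power2_eq_square algebra_simps)
  finally have h: "(2*X - F*N)^2 \<le> (F^2 - 4*d^2) * N^2" .
  have "2*X - F*N \<le> sqrt ((2*X - F*N)^2)" by (simp add: real_sqrt_abs)
  also have "\<dots> \<le> sqrt ((F^2 - 4*d^2) * N^2)" using h real_sqrt_le_mono by blast
  also have "\<dots> = sqrt (F^2 - 4*d^2) * N" using assms(3) by (simp add: real_sqrt_mult)
  finally show ?thesis by (simp add: algebra_simps)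
qed

lemma vec_bound: "(norm ((A::cmat2) *v x))^2 \<le> cA A * (norm x)^2"
proof -
  define u1 where "u1 = A$1$1 * x$1 + A$1$2 * x$2"
  define u2 where "u2 = A$2$1 * x$1 + A$2$2 * x$2"
  define w1 where "w1 = A$1$1 * (-cnj (x$2)) + A$1$2 * cnj (x$1)"
  define w2 where "w2 = A$2$1 * (-cnj (x$2)) + A$2$2 * cnj (x$1)"
  define X where "X = (cmod u1)^2 + (cmod u2)^2"
  define Y where "Y = (cmod w1)^2 + (cmod w2)^2"
  define N where "N = (norm x)^2"
  have X: "(norm (A *v x))^2 = X" unfolding X_def u1_def u2_def normsq mv1 mv2 ..
  have N: "N = (cmod (x$1))^2 + (cmod (x$2))^2" unfolding N_def normsq ..
  have s1: "X + Y = Fro A * N" unfolding X_def Y_def N Fro_def u1_def u2_def w1_def w2_def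
    using lagr by simp
  have "u1*w2 - u2*w1 = det A * (x$1 * cnj (x$1) + x$2 * cnj (x$2))"
    unfolding u1_def u2_def w1_def w2_def det_2 by (simp add: algebra_simps)
  also have "\<dots> = det A * complex_of_real N" unfolding N of_real_add cr ..
  finally have "cmod (u1*w2 - u2*w1) = cmod (det A * complex_of_real N)" by simp
  also have "\<dots> = cmod (det A) * N"
  proof -
    have "N \<ge> 0" using N_def by simp
    thus ?thesis by (simp only: norm_mult norm_of_real abs_of_nonneg)
  qed
  finally have "cmod (u1*w2 - u2*w1) = cmod (det A) * N" .
  hence s2: "(cmod (det A))^2 * N^2 \<le> X * Y"
    using lagrange2[of u1 u2 w1 w2] unfolding X_def Y_def by (simp add: power_mult_distrib)
  have "X \<le> cA A * N" unfolding cA_def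
    by (rule real_step[OF _ _ _ s1 s2]) (auto simp: X_def Y_def N_def)
  then show ?thesis using X N_def by simp
qed

lemma fro_ge: "2 * cmod (det A) \<le> Fro A"
proof -
  have "cmod (det A) \<le> cmod (A$1$1) * cmod (A$2$2) + cmod (A$1$2) * cmod (A$2$1)"
  proof -
    have "cmod (A$1$1 * A$2$2 - A$1$2 * A$2$1) \<le> cmod (A$1$1 * A$2$2) + cmod (A$1$2 * A$2$1)"
      by (rule norm_triangle_ineq4)
    thus ?thesis unfolding det_2 norm_mult .
  qed
  moreover have "2 * (cmod (A$1$1) * cmod (A$2$2)) \<le> (cmod (A$1$1))^2 + (cmod (A$2$2))^2"
    using sum_squares_bound[of "cmod (A$1$1)" "cmod (A$2$2)"] by (simp add: mult.assoc)
  moreover have "2 * (cmod (A$1$2) * cmod (A$2$1)) \<le> (cmod (A$1$2))^2 + (cmod (A$2$1))^2"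
    using sum_squares_bound[of "cmod (A$1$2)" "cmod (A$2$1)"] by (simp add: mult.assoc)
  ultimately show ?thesis unfolding Fro_def by linarith
qed

lemma cA_nonneg: "cA A \<ge> 0"
proof -
  have "(2 * cmod (det A))^2 \<le> (Fro A)^2"
    using fro_ge[of A] by (intro power_mono) auto
  hence "0 \<le> sqrt ((Fro A)^2 - 4 * (cmod (det A))^2)" by (simp add: power_mult_distrib)
  moreover have "Fro A \<ge> 0" unfolding Fro_def by simp
  ultimately show ?thesis unfolding cA_def by simp
qed

lemma opnorm_le_cA: "opnorm A \<le> sqrt (cA A)"
  unfolding opnorm_def
proof (rule onorm_le)
  fix x :: "complex^2"
  have "norm (A *v x) = sqrt ((norm (A *v x))^2)" by simp
  also have "\<dots> \<le> sqrt (cA A * (norm x)^2)" using vec_bound real_sqrt_le_mono by blast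
  also have "\<dots> = sqrt (cA A) * norm x" by (simp add: real_sqrt_mult)
  finally show "norm (A *v x) \<le> sqrt (cA A) * norm x" .
qed

lemma cA_lt1:
  assumes "Fro A < 1 + (cmod (det A))^2" "cmod (det A) < 1"
  shows "cA A < 1"
proof -
  define F where "F = Fro A"
  define d where "d = cmod (det A)"
  have d0: "d \<ge> 0" unfolding d_def by simp
  have "d^2 < 1" using assms(2) d0 unfolding d_def by (simp add: abs_square_less_1)
  hence F2: "F < 2" using assms(1) unfolding F_def d_def by linarith
  have "F^2 - 4*d^2 < (2 - F)^2" using assms unfolding F_def[symmetric] d_def[symmetric]
    by (simp add: power2_eq_square algebra_simps)
  hence "sqrt (F^2 - 4*d^2) < sqrt ((2-F)^2)" by (rule real_sqrt_less_mono)
  hence "sqrt (F^2 - 4*d^2) < 2 - F" using F2 by simp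
  thus ?thesis unfolding cA_def F_def[symmetric] d_def[symmetric] by simp
qed

lemma cA_le1:
  assumes "Fro A \<le> 1 + (cmod (det A))^2" "cmod (det A) \<le> 1"
  shows "cA A \<le> 1"
proof -
  define F where "F = Fro A"
  define d where "d = cmod (det A)"
  have d0: "d \<ge> 0" unfolding d_def by simp
  have "d^2 \<le> 1" using assms(2) d0 unfolding d_def by (simp add: abs_square_le_1)
  hence F2: "F \<le> 2" using assms(1) unfolding F_def d_def by linarith
  have "F^2 - 4*d^2 \<le> (2 - F)^2" using assms unfolding F_def[symmetric] d_def[symmetric]
    by (simp add: power2_eq_square algebra_simps)
  hence "sqrt (F^2 - 4*d^2) \<le> sqrt ((2-F)^2)" by (rule real_sqrt_le_mono)
  hence "sqrt (F^2 - 4*d^2) \<le> 2 - F" using F2 by simp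
  thus ?thesis unfolding cA_def F_def[symmetric] d_def[symmetric] by simp
qed

lemma opnorm_lt1:
  assumes "Fro A < 1 + (cmod (det A))^2" "cmod (det A) < 1"
  shows "opnorm A < 1"
  using opnorm_le_cA[of A] cA_lt1[OF assms] cA_nonneg[of A] by (meson order_le_less_trans real_sqrt_lt_1_iff)

lemma opnorm_le1:
  assumes "Fro A \<le> 1 + (cmod (det A))^2" "cmod (det A) \<le> 1"
  shows "opnorm A \<le> 1"
  using opnorm_le_cA[of A] cA_le1[OF assms] cA_nonneg[of A] by (meson order_trans real_sqrt_le_1_iff)

lemma opnorm_nonneg: "opnorm A \<ge> 0"
  unfolding opnorm_def by (rule onorm_pos_le) simp

lemma opnorm_apply: "norm (A *v x) \<le> opnorm A * norm x"
  unfolding opnorm_def by (rule onorm) simp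

lemma singular_bound:
  assumes "det (mat 1 - A ** X) = 0"
  shows "opnorm A * opnorm X \<ge> 1"
proof -
  have "\<not> invertible (mat 1 - A ** X)" using assms invertible_det_nz by blast
  hence "\<not> (\<exists>B. B ** (mat 1 - A ** X) = mat 1)" using invertible_left_inverse by blast
  then obtain x where x: "(mat 1 - A ** X) *v x = 0" "x \<noteq> 0"
    using matrix_left_invertible_ker by blast
  have "x = A *v (X *v x)" using x(1)
    by (simp add: matrix_vector_mult_diff_rdistrib matrix_vector_mul_assoc)
  hence "norm x \<le> opnorm A * norm (X *v x)" using opnorm_apply[of A "X *v x"] by simp
  also have "\<dots> \<le> opnorm A * (opnorm X * norm x)"
    by (intro mult_left_mono opnorm_apply opnorm_nonneg)
  finally have "1 * norm x \<le> (opnorm A * opnorm X) * norm x" by simp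
  thus ?thesis using x(2) by (simp add: mult_le_cancel_right)
qed


definition Xm :: "complex \<Rightarrow> complex \<Rightarrow> cmat2" where
  "Xm z w = (\<chi> i j. if i = j then z else if i = 1 \<and> j = 2 then w else 0)"

lemma Xm_E: "Xm z w \<in> E_space" unfolding E_space_def Xm_def by blast

lemma detE: "det (mat 1 - A ** Xm z w) = 1 - (A$1$1 + A$2$2) * z + det A * z^2 - A$2$1 * w"
  by (simp add: det_2 Xm_def matrix_matrix_mult_def sum_2 mat_def power2_eq_square algebra_simps)

lemma Xm_norm:
  assumes "cmod w \<le> 1 - (cmod z)^2"
  shows "opnorm (Xm z w) \<le> 1"
proof (rule opnorm_le1)
  have F: "Fro (Xm z w) = 2 * (cmod z)^2 + (cmod w)^2" by (simp add: Fro_def Xm_def)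
  have D: "det (Xm z w) = z^2" by (simp add: det_2 Xm_def power2_eq_square)
  have z1: "(cmod z)^2 \<le> 1" using assms norm_ge_zero[of w] by linarith
  have "(cmod w)^2 \<le> (1 - (cmod z)^2)^2" using assms by (intro power_mono) auto
  thus "Fro (Xm z w) \<le> 1 + (cmod (det (Xm z w)))^2"
    unfolding F D by (simp add: norm_power norm_mult power2_eq_square algebra_simps)
  show "cmod (det (Xm z w)) \<le> 1" unfolding D using z1 by (simp add: norm_power)
qed

lemma opnorm_pos_sing:
  assumes "X \<in> singular_set A"
  shows "opnorm A > 0" "opnorm X \<ge> 1 / opnorm A"
proof -
  have h: "opnorm A * opnorm X \<ge> 1" using assms singular_bound unfolding singular_set_def by blast
  show "opnorm A > 0"
  proof (rule ccontr)
    assume "\<not> opnorm A > 0"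
    hence "opnorm A = 0" using opnorm_nonneg[of A] by linarith
    thus False using h by simp
  qed
  thus "opnorm X \<ge> 1 / opnorm A" using h by (simp add: divide_le_eq mult.commute)
qed

lemma mu_lt1_imp:
  assumes "mu_E A < 1" "X \<in> singular_set A"
  shows "opnorm X > 1"
proof -
  let ?S = "opnorm ` singular_set A"
  have ne: "singular_set A \<noteq> {}" using assms by blast
  have pos: "opnorm A > 0" using opnorm_pos_sing(1)[OF assms(2)] .
  have "Inf ?S \<ge> 1 / opnorm A"
    by (rule cInf_greatest) (use ne opnorm_pos_sing(2) in auto)
  moreover have "1 / opnorm A > 0" using pos by simp
  ultimately have ip: "Inf ?S > 0" by linarith
  have "1 / Inf ?S < 1" using assms(1) ne unfolding mu_E_def by simp
  hence i1: "Inf ?S > 1" using ip by (simp add: divide_less_eq)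
  have "Inf ?S \<le> opnorm X"
    by (rule cInf_lower) (use assms(2) opnorm_nonneg in \<open>auto intro!: bdd_belowI[where m=0]\<close>)
  thus ?thesis using i1 by simp
qed

lemma P_imp_mu:
  assumes "opnorm A < 1"
  shows "mu_E A < 1"
proof (cases "singular_set A = {}")
  case True then show ?thesis unfolding mu_E_def by simp
next
  case False
  let ?S = "opnorm ` singular_set A"
  have pos: "opnorm A > 0" using False opnorm_pos_sing(1) by blast
  have "Inf ?S \<ge> 1 / opnorm A"
    by (rule cInf_greatest) (use False opnorm_pos_sing(2) in auto)
  moreover have "1 / opnorm A > 1" using pos assms by simp
  ultimately have "Inf ?S > 1" by simp
  thus ?thesis using False unfolding mu_E_def by simp
qed

lemma mu_pointwise:
  assumes "mu_E A < 1" "cmod z \<le> 1"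
  shows "cmod (A$2$1) * (1 - (cmod z)^2) < cmod (1 - (A$1$1 + A$2$2) * z + det A * z^2)"
proof (rule ccontr)
  let ?D = "1 - (A$1$1 + A$2$2) * z + det A * z^2"
  assume "\<not> ?thesis"
  hence le: "cmod ?D \<le> cmod (A$2$1) * (1 - (cmod z)^2)" by simp
  define w where "w = (if A$2$1 = 0 then 0 else ?D / A$2$1)"
  have D: "?D = A$2$1 * w"
  proof (cases "A$2$1 = 0")
    case True then show ?thesis using le w_def by simp
  next
    case False then show ?thesis unfolding w_def by simp
  qed
  have "cmod w \<le> 1 - (cmod z)^2"
  proof (cases "A$2$1 = 0")
    case True then show ?thesis using w_def assms(2)
      by (simp add: abs_square_le_1)
  next
    case False
    have "cmod w = cmod ?D / cmod (A$2$1)" unfolding w_def using False by (simp add: norm_divide)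
    also have "\<dots> \<le> 1 - (cmod z)^2" using le False by (simp add: divide_le_eq mult.commute)
    finally show ?thesis .
  qed
  hence "opnorm (Xm z w) \<le> 1" by (rule Xm_norm)
  moreover have "Xm z w \<in> singular_set A"
    unfolding singular_set_def using Xm_E detE D by simp
  hence "opnorm (Xm z w) > 1" by (rule mu_lt1_imp[OF assms(1)])
  ultimately show False by linarith
qed


definition Kf :: "complex \<Rightarrow> complex \<Rightarrow> real" where
  "Kf l1 l2 = cmod (1 - cnj l2 * l1) / 2 + sqrt (1 - (cmod l1)^2) * sqrt (1 - (cmod l2)^2) / 2"

lemma ident_a: "(cmod (1 - l * z))^2 - (cmod (cnj z - l))^2 = (1 - (cmod l)^2) * (1 - (cmod z)^2)"
proof -
  have "complex_of_real ((cmod (1 - l * z))^2 - (cmod (cnj z - l))^2) = complex_of_real ((1 - (cmod l)^2) * (1 - (cmod z)^2))"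
    unfolding of_real_diff of_real_mult cr of_real_1 by (simp add: algebra_simps)
  thus ?thesis using of_real_eq_iff by blast
qed

lemma ident_b: "complex_of_real (1 - (cmod z)^2) * (1 - l1 * cnj l2) = (1 - l1 * z) * (1 - cnj l2 * cnj z) - (cnj z - l1) * (z - cnj l2)"
  unfolding of_real_diff cr of_real_1 by (simp add: algebra_simps)

lemma gen1: "- (v::complex) * b / W * cv = - (v * cv) * b / W" by (simp add: field_simps)
lemma gen2: "(c::complex) \<noteq> 0 \<Longrightarrow> - (a) * b / W = - (a / (W*c)) * (b * c)" by (simp add: field_simps)

lemma half_distrib: "((a::real)/2 + b/2) * c = (a*c + b*c)/2" by (simp add: field_simps)

lemma sqrt_aczel:
  fixes u1 u2 y1 y2 :: real
  assumes "0 \<le> y1" "y1 \<le> u1" "0 \<le> y2" "y2 \<le> u2"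
  shows "sqrt (u1^2 - y1^2) * sqrt (u2^2 - y2^2) \<le> u1*u2 - y1*y2"
    and "u1 * y2 = u2 * y1 \<Longrightarrow> sqrt (u1^2 - y1^2) * sqrt (u2^2 - y2^2) = u1*u2 - y1*y2"
proof -
  have "y1*y2 \<le> u1*u2" using assms by (intro mult_mono) auto
  hence R: "u1*u2 - y1*y2 \<ge> 0" by simp
  have "sqrt (u1^2 - y1^2) * sqrt (u2^2 - y2^2) = sqrt ((u1^2 - y1^2) * (u2^2 - y2^2))"
    by (simp add: real_sqrt_mult)
  also have id: "(u1^2 - y1^2) * (u2^2 - y2^2) = (u1*u2 - y1*y2)^2 - (u1*y2 - u2*y1)^2"
    by (simp add: power2_eq_square algebra_simps)
  finally have e: "sqrt (u1^2 - y1^2) * sqrt (u2^2 - y2^2) = sqrt ((u1*u2 - y1*y2)^2 - (u1*y2 - u2*y1)^2)" .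
  have "sqrt ((u1*u2 - y1*y2)^2 - (u1*y2 - u2*y1)^2) \<le> sqrt ((u1*u2 - y1*y2)^2)"
    by (rule real_sqrt_le_mono) simp
  also have "\<dots> = u1*u2 - y1*y2" using R by simp
  finally show "sqrt (u1^2 - y1^2) * sqrt (u2^2 - y2^2) \<le> u1*u2 - y1*y2" using e by simp
  assume "u1 * y2 = u2 * y1"
  hence z: "(u1*y2 - u2*y1)^2 = 0" by simp
  show "sqrt (u1^2 - y1^2) * sqrt (u2^2 - y2^2) = u1*u2 - y1*y2" unfolding e z using R by simp
qed

lemma sqrt_c: "(c::real) \<ge> 0 \<Longrightarrow> sqrt a * sqrt b * c = sqrt (a*c) * sqrt (b*c)"
proof -
  assume c: "c \<ge> 0"
  have "sqrt (a*c) * sqrt (b*c) = sqrt a * sqrt b * (sqrt c * sqrt c)" by (simp add: real_sqrt_mult mult_ac)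
  also have "sqrt c * sqrt c = c" using c by simp
  finally show ?thesis by simp
qed

lemma q_split:
  assumes "cmod l1 < 1" "cmod l2 < 1" "cmod z \<le> 1"
  shows "sqrt (1 - (cmod l1)^2) * sqrt (1 - (cmod l2)^2) * (1 - (cmod z)^2)
    = sqrt ((cmod (1 - l1 * z))^2 - (cmod (cnj z - l1))^2) * sqrt ((cmod (1 - l2 * z))^2 - (cmod (cnj z - l2))^2)"
proof -
  have z: "1 - (cmod z)^2 \<ge> 0" using assms(3) by (simp add: abs_square_le_1)
  show ?thesis unfolding ident_a by (rule sqrt_c[OF z])
qed

lemma uv_le:
  assumes "cmod l < 1" "cmod z \<le> 1"
  shows "cmod (cnj z - l) \<le> cmod (1 - l * z)"
proof -
  have a: "1 - (cmod l)^2 \<ge> 0" using assms(1) by (simp add: abs_square_le_1)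
  have b: "1 - (cmod z)^2 \<ge> 0" using assms(2) by (simp add: abs_square_le_1)
  have "0 \<le> (1 - (cmod l)^2) * (1 - (cmod z)^2)" using a b by (rule mult_nonneg_nonneg)
  hence "(cmod (cnj z - l))^2 \<le> (cmod (1 - l * z))^2" using ident_a[of l z] by linarith
  thus ?thesis by (rule power2_le_imp_le) simp
qed

lemma Kineq:
  assumes "cmod l1 < 1" "cmod l2 < 1" "cmod z \<le> 1"
  shows "Kf l1 l2 * (1 - (cmod z)^2) \<le> cmod ((1 - l1 * z) * (1 - l2 * z))"
proof -
  define u1 where "u1 = cmod (1 - l1 * z)"
  define u2 where "u2 = cmod (1 - l2 * z)"
  define y1 where "y1 = cmod (cnj z - l1)"
  define y2 where "y2 = cmod (cnj z - l2)"
  have z: "1 - (cmod z)^2 \<ge> 0" using assms(3) by (simp add: abs_square_le_1)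
  have "cmod (1 - cnj l2 * l1) * (1 - (cmod z)^2) = cmod (complex_of_real (1 - (cmod z)^2) * (1 - l1 * cnj l2))"
    by (simp only: norm_mult norm_of_real abs_of_nonneg[OF z] mult.commute[of l1 "cnj l2"] mult.commute[of "1 - (cmod z)^2"])
  also have "\<dots> \<le> cmod ((1 - l1 * z) * (1 - cnj l2 * cnj z)) + cmod ((cnj z - l1) * (z - cnj l2))"
    unfolding ident_b by (rule norm_triangle_ineq4)
  also have "\<dots> = u1 * u2 + y1 * y2"
  proof -
    have "cmod (1 - cnj l2 * cnj z) = cmod (cnj (1 - l2 * z))" by simp
    moreover have "cmod (z - cnj l2) = cmod (cnj (cnj z - l2))" by simp
    ultimately show ?thesis unfolding u1_def u2_def y1_def y2_def norm_mult complex_mod_cnj by simp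
  qed
  finally have b: "cmod (1 - cnj l2 * l1) * (1 - (cmod z)^2) \<le> u1 * u2 + y1 * y2" .
  have c: "sqrt (1 - (cmod l1)^2) * sqrt (1 - (cmod l2)^2) * (1 - (cmod z)^2) \<le> u1 * u2 - y1 * y2"
    unfolding q_split[OF assms] u1_def[symmetric] u2_def[symmetric] y1_def[symmetric] y2_def[symmetric]
    by (rule sqrt_aczel(1)) (use uv_le assms in \<open>auto simp: u1_def u2_def y1_def y2_def\<close>)
  have "Kf l1 l2 * (1 - (cmod z)^2) = (cmod (1 - cnj l2 * l1) * (1 - (cmod z)^2) + sqrt (1 - (cmod l1)^2) * sqrt (1 - (cmod l2)^2) * (1 - (cmod z)^2)) / 2"
    unfolding Kf_def half_distrib by (simp add: mult.assoc)
  also have "\<dots> \<le> u1 * u2" using b c by simp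
  finally show ?thesis unfolding u1_def u2_def norm_mult .
qed

lemma Keq:
  assumes "cmod l1 < 1" "cmod l2 < 1" "cmod z \<le> 1"
    and R: "(cnj z - l1) * (1 - z * l2) = - (cnj z - l2) * (1 - z * l1)"
  shows "Kf l1 l2 * (1 - (cmod z)^2) = cmod ((1 - l1 * z) * (1 - l2 * z))"
proof -
  define u1 where "u1 = cmod (1 - l1 * z)"
  define u2 where "u2 = cmod (1 - l2 * z)"
  define y1 where "y1 = cmod (cnj z - l1)"
  define y2 where "y2 = cmod (cnj z - l2)"
  have z: "1 - (cmod z)^2 \<ge> 0" using assms(3) by (simp add: abs_square_le_1)
  define A where "A = (1 - l1 * z) * (1 - cnj l2 * cnj z)"
  define B where "B = (cnj z - l1) * (z - cnj l2)"
  have uv: "u1 * y2 = u2 * y1"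
  proof -
    have "cmod ((cnj z - l1) * (1 - z * l2)) = cmod ((cnj z - l2) * (1 - z * l1))"
      unfolding R norm_mult norm_minus_cancel ..
    thus ?thesis unfolding u1_def u2_def y1_def y2_def norm_mult by (simp add: mult.commute)
  qed
  have AB: "cmod (A - B) = cmod A + cmod B"
  proof (cases "1 - l2 * z = 0")
    case True
    have "1 - cnj l2 * cnj z = cnj (1 - l2 * z)" by simp
    hence "A = 0" unfolding A_def using True by simp
    thus ?thesis by simp
  next
    case False
    define t where "t = (cmod (cnj z - l2))^2 / (cmod (1 - l2 * z))^2"
    have t0: "t \<ge> 0" unfolding t_def by simp
    have c1: "cnj z - l1 = - (cnj z - l2) * (1 - z * l1) / (1 - z * l2)"
      using R False by (simp add: eq_divide_eq mult.commute)
    define V where "V = cnj z - l2"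
    define W where "W = 1 - z * l2"
    have W0: "W \<noteq> 0" using False unfolding W_def by (simp add: mult.commute)
    have cW0: "cnj W \<noteq> 0" using W0 by simp
    have B1: "B = - (V * cnj V) * (1 - z * l1) / W"
    proof -
      have zc: "z - cnj l2 = cnj V" unfolding V_def by simp
      show ?thesis unfolding B_def c1 V_def[symmetric] W_def[symmetric] zc by (rule gen1)
    qed
    have A1: "A = (1 - z * l1) * cnj W"
      unfolding A_def W_def by (simp add: mult.commute)
    have t1: "complex_of_real t = (V * cnj V) / (W * cnj W)"
      unfolding t_def of_real_divide cr V_def W_def by (simp add: mult.commute)
    have Bt: "B = - complex_of_real t * A"
      unfolding B1 A1 t1 using cW0 by (rule gen2)
    from Bt have e: "A - B = complex_of_real (1 + t) * A" by (simp add: algebra_simps)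
    have "cmod (A - B) = (1 + t) * cmod A" unfolding e norm_mult norm_of_real using t0 by simp
    moreover have "cmod B = t * cmod A" using Bt t0 by (simp add: norm_mult)
    ultimately show ?thesis by (simp add: algebra_simps)
  qed
  have "cmod (1 - cnj l2 * l1) * (1 - (cmod z)^2) = cmod (complex_of_real (1 - (cmod z)^2) * (1 - l1 * cnj l2))"
    by (simp only: norm_mult norm_of_real abs_of_nonneg[OF z] mult.commute[of l1 "cnj l2"] mult.commute[of "1 - (cmod z)^2"])
  also have "\<dots> = cmod A + cmod B"
    unfolding ident_b A_def[symmetric] B_def[symmetric] by (rule AB)
  also have "\<dots> = u1 * u2 + y1 * y2"
  proof -
    have "cmod (1 - cnj l2 * cnj z) = cmod (cnj (1 - l2 * z))" by simp
    moreover have "cmod (z - cnj l2) = cmod (cnj (cnj z - l2))" by simp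
    ultimately show ?thesis unfolding A_def B_def u1_def u2_def y1_def y2_def norm_mult complex_mod_cnj by simp
  qed
  finally have b: "cmod (1 - cnj l2 * l1) * (1 - (cmod z)^2) = u1 * u2 + y1 * y2" .
  have c: "sqrt (1 - (cmod l1)^2) * sqrt (1 - (cmod l2)^2) * (1 - (cmod z)^2) = u1 * u2 - y1 * y2"
    unfolding q_split[OF assms(1-3)] u1_def[symmetric] u2_def[symmetric] y1_def[symmetric] y2_def[symmetric]
    by (rule sqrt_aczel(2)) (use uv_le assms uv in \<open>auto simp: u1_def u2_def y1_def y2_def\<close>)
  have "Kf l1 l2 * (1 - (cmod z)^2) = (cmod (1 - cnj l2 * l1) * (1 - (cmod z)^2) + sqrt (1 - (cmod l1)^2) * sqrt (1 - (cmod l2)^2) * (1 - (cmod z)^2)) / 2"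
    unfolding Kf_def half_distrib by (simp add: mult.assoc)
  also have "\<dots> = u1 * u2" using b c by simp
  finally show ?thesis unfolding u1_def u2_def norm_mult .
qed


lemma ofr_cmod: "complex_of_real (cmod z ^ 2) = z * cnj z" by (rule complex_norm_square)

lemma beta_ident:
  fixes l1 l2 :: complex
  shows "(1 - (cmod (l1*l2))^2) * (1 - (cmod (l1*l2))^2) - (cmod (l1 + l2 - cnj (l1+l2) * (l1*l2)))^2
     = (1 - (cmod l1)^2) * (1 - (cmod l2)^2) * (cmod (1 - cnj l1 * l2))^2"
proof -
  have "complex_of_real ((1 - (cmod (l1*l2))^2) * (1 - (cmod (l1*l2))^2) - (cmod (l1 + l2 - cnj (l1+l2) * (l1*l2)))^2)
     = complex_of_real ((1 - (cmod l1)^2) * (1 - (cmod l2)^2) * (cmod (1 - cnj l1 * l2))^2)"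
    unfolding of_real_diff of_real_mult cr of_real_1 by (simp add: algebra_simps)
  thus ?thesis using of_real_eq_iff by blast
qed

lemma alg_R:
  fixes b cb R p s l1 l2 :: complex
  assumes "b * cb = 1 - R^2" "s = b + cb * p" "1 + R \<noteq> 0" "s = l1 + l2" "p = l1 * l2"
  shows "(b/(1+R) - l1) * (1 - cb/(1+R) * l2) = - (b/(1+R) - l2) * (1 - cb/(1+R) * l1)"
proof -
  define c where "c = 1 + R"
  have c0: "c \<noteq> 0" using assms(3) c_def by simp
  have num: "2*b*c - (l1+l2)*c^2 - b*cb*(l1+l2) + 2*(l1*l2)*cb*c = 0"
  proof -
    have "2*b*c - (l1+l2)*c^2 - b*cb*(l1+l2) + 2*(l1*l2)*cb*c
        = 2*c*(b + cb*p) - s*(c^2 + b*cb)" using assms(4,5) by (simp add: algebra_simps)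
    also have "\<dots> = 2*c * s - s*(c^2 + 1 - R^2)" using assms(1,2) by simp
    also have "\<dots> = 0" unfolding c_def by (simp add: algebra_simps power2_eq_square)
    finally show ?thesis .
  qed
  have "(b/c - l1) * (1 - cb/c * l2) + (b/c - l2) * (1 - cb/c * l1)
     = (2*b*c - (l1+l2)*c^2 - b*cb*(l1+l2) + 2*(l1*l2)*cb*c) / c^2"
    using c0 by (simp add: field_simps power2_eq_square)
  hence "(b/c - l1) * (1 - cb/c * l2) + (b/c - l2) * (1 - cb/c * l1) = 0" unfolding num by simp
  hence "(b/c - l1) * (1 - cb/c * l2) = - ((b/c - l2) * (1 - cb/c * l1))"
    by (simp only: eq_neg_iff_add_eq_0)
  thus ?thesis unfolding c_def by (simp only: minus_mult_left)
qed

lemma alg_E: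
  fixes b cb R p s :: complex
  assumes "b * cb = 1 - R^2" "s = b + cb * p" "1 + R \<noteq> 0"
  shows "1 - s * (cb/(1+R)) + p * (cb/(1+R))^2 = (1 - (s * cb / 2) / (1 + R)) * (1 - (cb/(1+R)) * (b/(1+R)))"
proof -
  define c where "c = 1 + R"
  define X where "X = b * cb"
  define Y where "Y = cb^2 * p"
  have c0: "c \<noteq> 0" using assms(3) c_def by simp
  have e1: "1 - s * (cb/c) + p * (cb/c)^2 = (c^2 - X*c - Y*c + Y) / c^2"
    using c0 assms(2) unfolding X_def Y_def by (simp add: field_simps power2_eq_square)
  have e2: "(1 - (s * cb / 2) / c) * (1 - (cb/c) * (b/c)) = ((2*c - X - Y) * (c^2 - X)) / (2*c^3)"
    using c0 assms(2) unfolding X_def Y_def by (simp add: field_simps power2_eq_square power3_eq_cube)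
  have X: "X = (2 - c) * c" unfolding X_def c_def assms(1) by (simp add: algebra_simps power2_eq_square)
  have "(c^2 - X*c - Y*c + Y) / c^2 = ((2*c - X - Y) * (c^2 - X)) / (2*c^3)"
    unfolding X using c0 by (simp add: field_simps power2_eq_square power3_eq_cube)
  thus ?thesis using e1 e2 unfolding c_def by simp
qed


lemma cprime_ident: "(cmod (1 - cnj l2 * l1))^2 - (1 - (cmod l1)^2) * (1 - (cmod l2)^2) = (cmod (l2 - l1))^2"
proof -
  have "complex_of_real ((cmod (1 - cnj l2 * l1))^2 - (1 - (cmod l1)^2) * (1 - (cmod l2)^2)) = complex_of_real ((cmod (l2 - l1))^2)"
    unfolding of_real_diff of_real_mult cr of_real_1 by (simp add: algebra_simps)
  thus ?thesis using of_real_eq_iff by blast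
qed

lemma xy_ident:
  fixes th :: real
  shows "(cmod (l1 + of_real th * (l2 - l1)))^2 + (cmod (l2 - of_real th * (l2 - l1)))^2
    = (cmod l1)^2 + (cmod l2)^2 - 2 * (th * (1 - th)) * (cmod (l2 - l1))^2"
proof -
  have "complex_of_real ((cmod (l1 + of_real th * (l2 - l1)))^2 + (cmod (l2 - of_real th * (l2 - l1)))^2)
    = complex_of_real ((cmod l1)^2 + (cmod l2)^2 - 2 * (th * (1 - th)) * (cmod (l2 - l1))^2)"
    unfolding of_real_diff of_real_add of_real_mult cr of_real_1 by (simp add: algebra_simps)
  thus ?thesis using of_real_eq_iff by blast
qed

lemma diag_case:
  assumes "cmod l1 < 1" "cmod l2 < 1"
  shows "\<exists>A. opnorm A < 1 \<and> pi_map A = (0, l1 + l2, l1 * l2)"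
proof -
  define A :: cmat2 where "A = (\<chi> i j. if i = j then (if i = 1 then l1 else l2) else 0)"
  have F: "Fro A = (cmod l1)^2 + (cmod l2)^2" unfolding Fro_def A_def by simp
  have D: "det A = l1 * l2" unfolding det_2 A_def by simp
  have "0 < (1 - (cmod l1)^2) * (1 - (cmod l2)^2)"
    using assms by (intro mult_pos_pos) (simp_all add: abs_square_less_1)
  hence "Fro A < 1 + (cmod (det A))^2" unfolding F D by (simp add: norm_mult power_mult_distrib algebra_simps)
  moreover have "cmod (det A) < 1" unfolding D norm_mult using assms
    by (metis mult_strict_mono' norm_ge_zero mult_1_left)
  ultimately have "opnorm A < 1" by (rule opnorm_lt1)
  moreover have "pi_map A = (0, l1 + l2, l1 * l2)" unfolding pi_map_def D by (simp add: A_def)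
  ultimately show ?thesis by blast
qed

lemma construct:
  assumes l1: "cmod l1 < 1" and l2: "cmod l2 < 1" and aK: "cmod a < Kf l1 l2"
  shows "\<exists>A. opnorm A < 1 \<and> pi_map A = (a, l1 + l2, l1 * l2)"
proof (cases "a = 0")
  case True then show ?thesis using diag_case[OF l1 l2] by simp
next
  case False
  define t where "t = cmod a"
  define K where "K = Kf l1 l2"
  define q where "q = sqrt (1 - (cmod l1)^2) * sqrt (1 - (cmod l2)^2)"
  define c' where "c' = cmod (1 - cnj l2 * l1)"
  define m where "m = (cmod (l2 - l1))^2"
  have t0: "t > 0" using False t_def by simp
  have L1: "1 - (cmod l1)^2 > 0" using l1 by (simp add: abs_square_less_1)
  have L2: "1 - (cmod l2)^2 > 0" using l2 by (simp add: abs_square_less_1)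
  have q0: "q > 0" unfolding q_def using L1 L2 by simp
  have qsq: "q^2 = (1 - (cmod l1)^2) * (1 - (cmod l2)^2)"
    unfolding q_def using L1 L2 by (simp add: power_mult_distrib)
  have Kd: "K = (c' + q) / 2" unfolding K_def Kf_def c'_def q_def by simp
  have c'0: "c' \<ge> 0" unfolding c'_def by simp
  have K0: "K > 0" using Kd q0 c'0 by simp
  have tK: "t < K" using aK t_def K_def by simp
  have mc: "m = c'^2 - q^2" unfolding m_def c'_def qsq using cprime_ident[of l2 l1] by simp
  define k where "k = t^2 / (4 * K^2)"
  have k0: "k > 0" unfolding k_def using t0 K0 by simp
  have k14: "4 * k < 1" unfolding k_def using t0 K0 tK
    by (simp add: divide_less_eq power_strict_mono)
  define S where "S = sqrt (1 - 4 * k)"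
  define th where "th = (1 - S) / 2"
  have S2: "S^2 = 1 - 4 * k" unfolding S_def using k14 by simp
  have thk: "th * (1 - th) = k"
  proof -
    have "th * (1 - th) = (1 - S^2) / 4" unfolding th_def by (simp add: field_simps power2_eq_square)
    thus ?thesis using S2 by simp
  qed
  define d where "d = l2 - l1"
  define x where "x = l1 + of_real th * d"
  define y where "y = l2 - of_real th * d"
  define b where "b = of_real k * d^2 / a"
  define A :: cmat2 where "A = (\<chi> i j. if i = 1 then (if j = 1 then x else b) else (if j = 1 then a else y))"
  have A11: "A$1$1 = x" and A12: "A$1$2 = b" and A21: "A$2$1 = a" and A22: "A$2$2 = y"
    unfolding A_def by simp_all
  have thk_c: "of_real th * (1 - of_real th) = (complex_of_real k)"
    using thk by (metis of_real_1 of_real_diff of_real_mult)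
  have detA: "det A = l1 * l2"
  proof -
    have "det A = x * y - b * a" unfolding det_2 A11 A12 A21 A22 by simp
    also have "b * a = of_real k * d^2" unfolding b_def using False by simp
    also have "x * y = l1 * l2 + (of_real th * (1 - of_real th)) * d^2"
      unfolding x_def y_def d_def by (simp add: algebra_simps power2_eq_square)
    finally show ?thesis unfolding thk_c by simp
  qed
  have trA: "A$1$1 + A$2$2 = l1 + l2" unfolding A11 A22 x_def y_def by simp
  have bmod: "cmod b = k * m / t" unfolding b_def m_def d_def t_def using k0
    by (simp add: norm_mult norm_divide norm_power)
  have FroA: "Fro A = (cmod l1)^2 + (cmod l2)^2 - 2 * k * m + t^2 + (k * m / t)^2"
  proof -
    have "Fro A = ((cmod x)^2 + (cmod y)^2) + (cmod b)^2 + t^2"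
      unfolding Fro_def A11 A12 A21 A22 t_def by simp
    also have "(cmod x)^2 + (cmod y)^2 = (cmod l1)^2 + (cmod l2)^2 - 2 * k * m"
      unfolding x_def y_def d_def xy_ident thk m_def by simp
    finally show ?thesis unfolding bmod by simp
  qed
  have key: "t - k * m / t = t * q / K"
  proof -
    have "k * m / t = t * m / (4 * K^2)" unfolding k_def using t0 by (simp add: field_simps power2_eq_square)
    moreover have e2: "4 * K^2 - m = 4 * q * K" unfolding mc Kd by (simp add: algebra_simps power2_eq_square)
    moreover have "t - t * m / (4 * K^2) = t * (4 * K^2 - m) / (4 * K^2)"
      using K0 by (simp add: field_simps)
    moreover have "t * (4 * q * K) / (4 * K^2) = t * q / K"
      using K0 by (simp add: power2_eq_square)
    ultimately show ?thesis by simp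
  qed
  have Fro2: "Fro A = (cmod l1)^2 + (cmod l2)^2 + (t * q / K)^2"
  proof -
    have "(t - k * m / t)^2 = t^2 - 2 * k * m + (k * m / t)^2"
      using t0 by (simp add: power2_eq_square field_simps)
    thus ?thesis unfolding FroA key[symmetric] by simp
  qed
  have "t * q / K < q" using tK q0 K0 by (simp add: divide_less_eq)
  moreover have "t * q / K \<ge> 0" using t0 q0 K0 by simp
  ultimately have "(t * q / K)^2 < q^2" by (simp add: power_strict_mono)
  hence "Fro A < 1 + (cmod (det A))^2"
    unfolding Fro2 qsq detA by (simp add: norm_mult power_mult_distrib algebra_simps)
  moreover have "cmod (det A) < 1" unfolding detA norm_mult using l1 l2
    by (metis mult_strict_mono' norm_ge_zero mult_1_left)
  ultimately have "opnorm A < 1" by (rule opnorm_lt1)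
  moreover have "pi_map A = (a, l1 + l2, l1 * l2)" unfolding pi_map_def detA A21 trA by simp
  ultimately show ?thesis by blast
qed


lemma prod_lt1: "cmod (l1::complex) < 1 \<Longrightarrow> cmod l2 < 1 \<Longrightarrow> cmod (l1 * l2) < 1"
  unfolding norm_mult by (metis mult_strict_mono' norm_ge_zero mult_1_left)

lemma one_minus_sq_pos: "cmod (l::complex) < 1 \<Longrightarrow> 1 - (cmod l)^2 > 0"
  by (simp add: abs_square_less_1)

lemma z0_props:
  fixes l1 l2 s p \<beta> z0 :: complex
  assumes l1: "cmod l1 < 1" and l2: "cmod l2 < 1"
  defines "s \<equiv> l1 + l2"
      and "p \<equiv> l1 * l2"
      and "\<beta> \<equiv> (s - cnj s * p) / (1 - of_real ((cmod p)^2))"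
      and "z0 \<equiv> cnj \<beta> / (1 + of_real (sqrt (1 - (cmod \<beta>)^2)))"
  shows "cmod \<beta> < 1" "cmod z0 < 1"
    "Kf l1 l2 * (1 - (cmod z0)^2) = cmod ((1 - l1 * z0) * (1 - l2 * z0))"
    "1 - s * z0 + p * z0^2 = (1 - (s * cnj \<beta> / 2) / (1 + of_real (sqrt (1 - (cmod \<beta>)^2)))) * of_real (1 - (cmod z0)^2)"
proof -
  have pn: "cmod p < 1" unfolding p_def using l1 l2 by (rule prod_lt1)
  define Dn where "Dn = 1 - (cmod p)^2"
  have Dn0: "Dn > 0" unfolding Dn_def using pn by (rule one_minus_sq_pos)
  have Dc: "1 - complex_of_real ((cmod p)^2) = complex_of_real Dn" unfolding Dn_def by simp
  have bmod: "cmod \<beta> = cmod (s - cnj s * p) / Dn"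
    unfolding \<beta>_def Dc norm_divide norm_of_real using Dn0 by simp
  have "cmod (cnj l1 * l2) < 1" using l1 l2 prod_lt1[of "cnj l1" l2] by simp
  hence "1 - cnj l1 * l2 \<noteq> 0" by auto
  hence "(1 - (cmod l1)^2) * (1 - (cmod l2)^2) * (cmod (1 - cnj l1 * l2))^2 > 0"
    using one_minus_sq_pos[OF l1] one_minus_sq_pos[OF l2] by simp
  hence "Dn * Dn - (cmod (s - cnj s * p))^2 > 0"
    using beta_ident[of l1 l2] unfolding Dn_def s_def p_def by simp
  hence "(cmod (s - cnj s * p))^2 < Dn^2" by (simp add: power2_eq_square)
  hence "cmod (s - cnj s * p) < Dn" using Dn0 by (simp add: power_less_imp_less_base)
  thus bl: "cmod \<beta> < 1" unfolding bmod using Dn0 by simp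
  have sb: "s = \<beta> + cnj \<beta> * p"
  proof -
    have Dc0: "complex_of_real Dn \<noteq> 0" using Dn0 by simp
    have Dcp: "complex_of_real Dn = 1 - p * cnj p" unfolding Dn_def of_real_diff cr by simp
    have "\<beta> = (s - cnj s * p) / complex_of_real Dn" unfolding \<beta>_def Dc ..
    moreover have "cnj \<beta> = (cnj s - s * cnj p) / complex_of_real Dn" unfolding \<beta>_def Dc by simp
    ultimately have "\<beta> + cnj \<beta> * p = ((s - cnj s * p) + (cnj s - s * cnj p) * p) / complex_of_real Dn"
      by (simp add: add_divide_distrib)
    also have "(s - cnj s * p) + (cnj s - s * cnj p) * p = s * complex_of_real Dn"
      unfolding Dcp by (simp add: algebra_simps)
    finally show ?thesis using Dc0 by simp
  qed
  define r where "r = sqrt (1 - (cmod \<beta>)^2)"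
  define R where "R = complex_of_real r"
  have r0: "r > 0" unfolding r_def using one_minus_sq_pos[OF bl] by simp
  have R1: "1 + R \<noteq> 0" unfolding R_def using r0
    by (metis of_real_1 of_real_add of_real_eq_0_iff add_pos_pos zero_less_one less_irrefl)
  have bcb: "\<beta> * cnj \<beta> = 1 - R^2"
  proof -
    have "r^2 = 1 - (cmod \<beta>)^2" unfolding r_def using one_minus_sq_pos[OF bl] by simp
    have "R^2 = complex_of_real (r^2)" unfolding R_def by simp
    also have "\<dots> = complex_of_real (1 - (cmod \<beta>)^2)" using \<open>r^2 = _\<close> by simp
    also have "\<dots> = 1 - \<beta> * cnj \<beta>" unfolding of_real_diff cr by simp
    finally have "R^2 = 1 - \<beta> * cnj \<beta>" .
    thus ?thesis by simp
  qed
  have z0d: "z0 = cnj \<beta> / (1 + R)" unfolding z0_def R_def r_def ..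
  have cz0: "cnj z0 = \<beta> / (1 + R)" unfolding z0d R_def by simp
  have oR: "1 + R = complex_of_real (1 + r)" unfolding R_def by simp
  have "cmod z0 = cmod \<beta> / (1 + r)" unfolding z0d oR norm_divide norm_of_real complex_mod_cnj using r0 by simp
  thus z0l: "cmod z0 < 1" using bl r0 by (simp add: divide_less_eq)
  have Rrel: "(cnj z0 - l1) * (1 - z0 * l2) = - (cnj z0 - l2) * (1 - z0 * l1)"
    unfolding cz0 unfolding z0d by (rule alg_R[OF bcb sb R1 meta_eq_to_obj_eq[OF s_def] meta_eq_to_obj_eq[OF p_def]])
  show "Kf l1 l2 * (1 - (cmod z0)^2) = cmod ((1 - l1 * z0) * (1 - l2 * z0))"
    by (rule Keq[OF l1 l2 _ Rrel]) (use z0l in simp)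
  have "1 - s * z0 + p * z0^2 = (1 - (s * cnj \<beta> / 2) / (1 + R)) * (1 - z0 * cnj z0)"
    unfolding cz0 unfolding z0d by (rule alg_E[OF bcb sb R1])
  also have "1 - z0 * cnj z0 = of_real (1 - (cmod z0)^2)" unfolding of_real_diff cr by simp
  finally show "1 - s * z0 + p * z0^2 = (1 - (s * cnj \<beta> / 2) / (1 + of_real (sqrt (1 - (cmod \<beta>)^2)))) * of_real (1 - (cmod z0)^2)"
    unfolding R_def r_def .
qed


lemma Dfac: "1 - (l1 + l2) * z + (l1 * l2) * z^2 = (1 - l1 * z) * (1 - l2 * (z::complex))"
  by (simp add: algebra_simps power2_eq_square)

lemma exists_z0:
  assumes l1: "cmod l1 < 1" and l2: "cmod l2 < 1"
  shows "\<exists>z. cmod z < 1 \<and> Kf l1 l2 * (1 - (cmod z)^2) = cmod ((1 - l1 * z) * (1 - l2 * z))"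
  using z0_props(2,3)[OF l1 l2] by blast

lemma mu_to_K:
  assumes l1: "cmod l1 < 1" and l2: "cmod l2 < 1" and mu: "mu_E A < 1"
    and tr: "A$1$1 + A$2$2 = l1 + l2" and dt: "det A = l1 * l2"
  shows "cmod (A$2$1) < Kf l1 l2"
proof -
  obtain z where z: "cmod z < 1" "Kf l1 l2 * (1 - (cmod z)^2) = cmod ((1 - l1 * z) * (1 - l2 * z))"
    using exists_z0[OF l1 l2] by blast
  have "cmod (A$2$1) * (1 - (cmod z)^2) < cmod (1 - (A$1$1 + A$2$2) * z + det A * z^2)"
    using mu_pointwise[OF mu] z(1) by simp
  also have "\<dots> = Kf l1 l2 * (1 - (cmod z)^2)" unfolding tr dt Dfac z(2) ..
  finally show ?thesis using one_minus_sq_pos[OF z(1)] by simp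
qed

lemma Psi_norm:
  assumes "cmod z < 1"
  shows "cmod (Psi z a s p) = cmod a * (1 - (cmod z)^2) / cmod (1 - s * z + p * z^2)"
proof -
  have e: "1 - complex_of_real ((cmod z)^2) = complex_of_real (1 - (cmod z)^2)" by simp
  have "1 - (cmod z)^2 \<ge> 0" using one_minus_sq_pos[OF assms] by simp
  thus ?thesis unfolding Psi_def e norm_divide norm_mult norm_of_real by simp
qed

lemma sup_lemma:
  assumes l1: "cmod l1 < 1" and l2: "cmod l2 < 1" and sd: "s = l1 + l2" and pd: "p = l1 * l2"
  shows "(SUP z\<in>ball 0 1. cmod (Psi z a s p)) = cmod a / Kf l1 l2"
proof -
  have K0: "Kf l1 l2 > 0"
  proof -
    have "sqrt (1 - (cmod l1)^2) * sqrt (1 - (cmod l2)^2) > 0"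
      using one_minus_sq_pos[OF l1] one_minus_sq_pos[OF l2] by simp
    thus ?thesis unfolding Kf_def by (simp add: add_nonneg_pos)
  qed
  have D: "1 - s * z + p * z^2 = (1 - l1 * z) * (1 - l2 * z)" for z unfolding sd pd Dfac ..
  obtain z0 where z0: "cmod z0 < 1" "Kf l1 l2 * (1 - (cmod z0)^2) = cmod ((1 - l1 * z0) * (1 - l2 * z0))"
    using exists_z0[OF l1 l2] by blast
  show ?thesis unfolding image_image[symmetric]
  proof (rule cSup_eq_maximum)
    have "cmod (Psi z0 a s p) = cmod a * (1 - (cmod z0)^2) / (Kf l1 l2 * (1 - (cmod z0)^2))"
      unfolding Psi_norm[OF z0(1)] D z0(2) ..
    also have "\<dots> = cmod a / Kf l1 l2" using one_minus_sq_pos[OF z0(1)] by simp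
    finally show "cmod a / Kf l1 l2 \<in> (\<lambda>z. cmod (Psi z a s p)) ` ball 0 1"
      using z0(1) by (metis image_eqI mem_ball_0)
  next
    fix x assume "x \<in> (\<lambda>z. cmod (Psi z a s p)) ` ball 0 1"
    then obtain z where z: "cmod z < 1" and x: "x = cmod (Psi z a s p)" by auto
    have zp: "1 - (cmod z)^2 > 0" using one_minus_sq_pos[OF z] .
    have ki: "Kf l1 l2 * (1 - (cmod z)^2) \<le> cmod (1 - s * z + p * z^2)"
      unfolding D using Kineq[OF l1 l2] z by simp
    hence Dp: "cmod (1 - s * z + p * z^2) > 0" using K0 zp by (smt (verit) mult_pos_pos)
    have "1 - (cmod z)^2 \<le> cmod (1 - s * z + p * z^2) / Kf l1 l2"
      using ki K0 by (simp add: pos_le_divide_eq mult.commute)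
    hence "cmod a * (1 - (cmod z)^2) \<le> cmod a * (cmod (1 - s * z + p * z^2) / Kf l1 l2)"
      by (rule mult_left_mono) simp
    hence "cmod a * (1 - (cmod z)^2) / cmod (1 - s * z + p * z^2) \<le> cmod a * (cmod (1 - s * z + p * z^2) / Kf l1 l2) / cmod (1 - s * z + p * z^2)"
      by (rule divide_right_mono) (use Dp in simp)
    also have "\<dots> = cmod a / Kf l1 l2" using Dp by simp
    finally show "x \<le> cmod a / Kf l1 l2" unfolding x Psi_norm[OF z] .
  qed
qed

lemma eigen2: "\<exists>m1 m2::complex. m1 + m2 = T \<and> m1 * m2 = Dt"
proof -
  define w where "w = csqrt (T^2 - 4 * Dt)"
  have "w^2 = T^2 - 4 * Dt" unfolding w_def by simp
  hence "(T + w) / 2 + (T - w) / 2 = T \<and> ((T + w) / 2) * ((T - w) / 2) = Dt"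
    by (simp add: field_simps power2_eq_square)
  thus ?thesis by blast
qed

lemma eig_in_disc:
  assumes mu: "mu_E A < 1" and tr: "A$1$1 + A$2$2 = m1 + m2" and dt: "det A = m1 * m2"
  shows "cmod m1 < 1"
proof (rule ccontr)
  assume "\<not> cmod m1 < 1"
  hence m1: "cmod m1 \<ge> 1" by simp
  hence m0: "m1 \<noteq> 0" by auto
  define z where "z = 1 / m1"
  have z1: "cmod z \<le> 1" unfolding z_def using m1 by (simp add: norm_divide divide_le_eq)
  have "1 - (A$1$1 + A$2$2) * z + det A * z^2 = (1 - m1 * z) * (1 - m2 * z)" unfolding tr dt Dfac ..
  also have "\<dots> = 0" unfolding z_def using m0 by simp
  finally have "cmod (A$2$1) * (1 - (cmod z)^2) < 0" using mu_pointwise[OF mu z1] by simp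
  moreover have "cmod (A$2$1) * (1 - (cmod z)^2) \<ge> 0" using z1 by (simp add: abs_square_le_1)
  ultimately show False by simp
qed

lemma global_eq: "pentablock = pentablock_mu"
proof
  show "pentablock \<subseteq> pentablock_mu"
    unfolding pentablock_def pentablock_mu_def unit_ball_mat_def using P_imp_mu by blast
next
  show "pentablock_mu \<subseteq> pentablock"
  proof
    fix x assume "x \<in> pentablock_mu"
    then obtain A where mu: "mu_E A < 1" and x: "x = pi_map A" unfolding pentablock_mu_def by blast
    obtain m1 m2 where m: "m1 + m2 = A$1$1 + A$2$2" "m1 * m2 = det A" using eigen2 by blast
    have d1: "cmod m1 < 1" by (rule eig_in_disc[OF mu m(1)[symmetric] m(2)[symmetric]])
    have d2: "cmod m2 < 1" by (rule eig_in_disc[OF mu, of m2 m1]) (use m in \<open>simp_all add: ac_simps\<close>)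
    have "cmod (A$2$1) < Kf m1 m2" by (rule mu_to_K[OF d1 d2 mu m(1)[symmetric] m(2)[symmetric]])
    then obtain B where B: "opnorm B < 1" "pi_map B = (A$2$1, m1 + m2, m1 * m2)"
      using construct[OF d1 d2] by blast
    have "pi_map B = x" unfolding x B(2) using m by (simp add: pi_map_def)
    thus "x \<in> pentablock" unfolding pentablock_def unit_ball_mat_def using B(1) by blast
  qed
qed


lemma final_core:
  fixes l1 l2 a s p \<beta> :: complex
  assumes l1: "cmod l1 < 1" and l2: "cmod l2 < 1"
    and sd: "s = l1 + l2" and pd: "p = l1 * l2"
    and bd: "\<beta> = (s - cnj s * p) / (1 - of_real ((cmod p)^2))"
  shows "((a, s, p) \<in> pentablock \<longleftrightarrow> (a, s, p) \<in> pentablock_mu)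
       \<and> ((a, s, p) \<in> pentablock_mu \<longleftrightarrow>
            cmod a < cmod (1 - (s * cnj \<beta> / 2) / (1 + of_real (sqrt (1 - (cmod \<beta>)^2)))))
       \<and> ((a, s, p) \<in> pentablock \<longleftrightarrow>
            cmod a < cmod (1 - cnj l2 * l1) / 2
                     + sqrt (1 - (cmod l1)^2) * sqrt (1 - (cmod l2)^2) / 2)
       \<and> ((a, s, p) \<in> pentablock \<longleftrightarrow>
            (SUP z\<in>ball 0 1. cmod (Psi z a s p)) < 1)
       \<and> pentablock = pentablock_mu"
proof -
  define K where "K = Kf l1 l2"
  define z0 where "z0 = cnj \<beta> / (1 + of_real (sqrt (1 - (cmod \<beta>)^2)))"
  define E where "E = 1 - (s * cnj \<beta> / 2) / (1 + of_real (sqrt (1 - (cmod \<beta>)^2)))"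
  have zp1: "cmod z0 < 1" and zp2: "K * (1 - (cmod z0)^2) = cmod ((1 - l1 * z0) * (1 - l2 * z0))"
    and zp3: "1 - s * z0 + p * z0^2 = E * of_real (1 - (cmod z0)^2)"
    using z0_props[OF l1 l2] unfolding z0_def E_def K_def bd sd pd by simp_all
  have pos: "1 - (cmod z0)^2 > 0" using one_minus_sq_pos[OF zp1] .
  have "cmod (1 - s * z0 + p * z0^2) = cmod ((1 - l1 * z0) * (1 - l2 * z0))"
    unfolding sd pd Dfac ..
  moreover have "cmod (1 - s * z0 + p * z0^2) = cmod E * (1 - (cmod z0)^2)"
    unfolding zp3 norm_mult norm_of_real using pos by simp
  ultimately have "cmod E * (1 - (cmod z0)^2) = K * (1 - (cmod z0)^2)"
    unfolding zp2 by simp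
  hence EK: "cmod E = K" using pos by simp
  have K0: "K > 0"
  proof -
    have "sqrt (1 - (cmod l1)^2) * sqrt (1 - (cmod l2)^2) > 0"
      using one_minus_sq_pos[OF l1] one_minus_sq_pos[OF l2] by simp
    thus ?thesis unfolding K_def Kf_def by (simp add: add_nonneg_pos)
  qed
  have PM_K: "(a, s, p) \<in> pentablock_mu \<Longrightarrow> cmod a < K"
  proof -
    assume "(a, s, p) \<in> pentablock_mu"
    then obtain A where mu: "mu_E A < 1" and pa: "pi_map A = (a, s, p)"
      unfolding pentablock_mu_def by auto
    have "A$2$1 = a" "A$1$1 + A$2$2 = l1 + l2" "det A = l1 * l2"
      using pa unfolding pi_map_def sd pd by simp_all
    thus "cmod a < K" using mu_to_K[OF l1 l2 mu] unfolding K_def by simp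
  qed
  have K_P: "cmod a < K \<Longrightarrow> (a, s, p) \<in> pentablock"
  proof -
    assume "cmod a < K"
    then obtain A where A: "opnorm A < 1" "pi_map A = (a, l1 + l2, l1 * l2)"
      using construct[OF l1 l2] unfolding K_def by blast
    show ?thesis unfolding pentablock_def unit_ball_mat_def sd pd
      by (rule image_eqI[where x=A]) (use A in auto)
  qed
  have P_PM: "(a, s, p) \<in> pentablock \<Longrightarrow> (a, s, p) \<in> pentablock_mu"
    using global_eq by simp
  have i1: "(a, s, p) \<in> pentablock \<longleftrightarrow> cmod a < K" using PM_K K_P P_PM by blast
  have i2: "(a, s, p) \<in> pentablock_mu \<longleftrightarrow> cmod a < K" using PM_K K_P P_PM by blast
  have sup: "(SUP z\<in>ball 0 1. cmod (Psi z a s p)) = cmod a / K"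
    unfolding K_def by (rule sup_lemma[OF l1 l2 sd pd])
  have i4: "(SUP z\<in>ball 0 1. cmod (Psi z a s p)) < 1 \<longleftrightarrow> cmod a < K"
    unfolding sup using K0 by (simp add: divide_less_eq)
  show ?thesis
    using i1 i2 i4 global_eq EK unfolding E_def K_def Kf_def by simp
qed

theorem theorem5p2:
  fixes l1 l2 a s p \<beta> :: complex
  assumes "cmod l1 < 1" and "cmod l2 < 1"
  defines "s \<equiv> l1 + l2"
      and "p \<equiv> l1 * l2"
      and "\<beta> \<equiv> (s - cnj s * p) / (1 - of_real ((cmod p)^2))"
  shows "((a, s, p) \<in> pentablock \<longleftrightarrow> (a, s, p) \<in> pentablock_mu)
       \<and> ((a, s, p) \<in> pentablock_mu \<longleftrightarrow>
            cmod a < cmod (1 - (s * cnj \<beta> / 2) / (1 + of_real (sqrt (1 - (cmod \<beta>)^2)))))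
       \<and> ((a, s, p) \<in> pentablock \<longleftrightarrow>
            cmod a < cmod (1 - cnj l2 * l1) / 2
                     + sqrt (1 - (cmod l1)^2) * sqrt (1 - (cmod l2)^2) / 2)
       \<and> ((a, s, p) \<in> pentablock \<longleftrightarrow>
            (SUP z\<in>ball 0 1. cmod (Psi z a s p)) < 1)
       \<and> pentablock = pentablock_mu"
  by (rule final_core[OF assms(1,2)]) (simp_all add: s_def p_def \<beta>_def)


end
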